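(* Let $(S^*,c_{\lim})$ be a measurement tuple with $m$ measurements, adjoint fields $c_1^*,\dots,c_m^*$, and let $J_+=\{j:c_{\lim,j}>0\}$ and $J_-=\{j:c_{\lim,j}<0\}$ both be nonempty (so $J_+\cup J_-=\{1,\dots,m\}$). Assume $0<\sup c_j^*<\infty$ for $j\in J_+$. Let $k_j>0$ and $0\le\beta_j\le\alpha_j$ for $j=1,\dots,m$, and $$\mathcal S=\bigcap_{j=1}^m\{S\in\mathcal M^+:\ \beta_jS\{c_j^*\ge k_j\}\le S\{c_j^*<k_j\}\le\alpha_jS\{c_j^*\ge k_j\}\}.$$ Then: (i) $Z=\bigcup_{j\in J_-}\{c_j^*\ge k_j\}$ is a posterior $(S^*,c_{\lim},\mathcal S,M_{Z,\lim})$-zero footprint with $M_{Z,\lim}=\sum_{j\in J_-}\dfrac{-c_{\lim,j}}{k_j+\beta_j\inf c_j^*}$; (ii) $F=\bigcup_{j\in J_+}\{c_j^*\ge k_j\}$ is a posterior $(S^*,c_{\lim},\mathcal S,M_{F,\lim})$-footprint with $M_{F,\lim}=\max_{j\in J_+}\dfrac{c_{\lim,j}}{k_j\alpha_j+\sup c_j^*}$; (iii) $F\setminus Z$ is a posterior $(S^*,c_{\lim},\mathcal S,M_{\lim})$-footprint with $$M_{\lim}=M_{F,\lim}-M_{Z,\lim}=\max_{j\in J_+}\frac{c_{\lim,j}}{k_j\alpha_j+\sup c_j^*}+\sum_{j\in J_-}\frac{c_{\lim,j}}{k_j+\beta_j\inf c_j^*}.$$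
   Context: Let $T\subset\mathbb{R}$ be a time interval, $V\subset\mathbb{R}^3$ a spatial domain, and $\mathcal M^+$ the set of positive measures on the Borel sets of $T\times V$. A measurement tuple consists of $m\ge1$ nonnegative measurable functions $c_1^*,\dots,c_m^*$ on $T\times V$ (the adjoint concentration fields $c_j^*(s,y)=\int_{T\times V}p(t,x;s,y)\,dS_j^*(t,x)$ of sensor probability measures $S_j^*$, $p$ being the transition probability of the dispersion; we write $S^*=(S_1^*,\dots,S_m^* )$) together with a vector $c_{\lim}=(c_{\lim,1},\dots,c_{\lim,m})$ of nonzero reals. Write $\langle S,c^*\rangle=\int c^*\,dS$. A measure $S\in\mathcal M^+$ satisfies the measurement condition for $(S^*,c_{\lim})$ if for every $j$: $\langle S,c_j^*\rangle\ge c_{\lim,j}$ when $c_{\lim,j}>0$ (detection), and $\langle S,c_j^*\rangle<|c_{\lim,j}|$ when $c_{\lim,j}<0$ (non-detection). Given an admissible class $\mathcal S\subseteq\mathcal M^+$ and $M_{\lim}\in\mathbb R$, a measurable set $A\subseteq T\times V$ is: a posterior $(S^*,c_{\lim},\mathcal S,M_{\lim})$-footprint if every $S\in\mathcal S$ satisfying the measurement condition has $S(A)\ge M_{\lim}$; a prior $(S^*,c_{\lim},\mathcal S,M_{\lim})$-footprint if every $S\in\mathcal S$ with $S(A)\ge M_{\lim}$ satisfies the measurement condition; a posterior $(S^*,c_{\lim},\mathcal S,M_{\lim})$-zero footprint if every $S\in\mathcal S$ satisfying the measurement condition has $S(A)<M_{\lim}$; a prior $(S^*,c_{\lim},\mathcal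 S,M_{\lim})$-zero footprint if every $S\in\mathcal S$ with $S(A)<M_{\lim}$ satisfies the measurement condition. Suprema, infima and level sets $\{c_j^*\ge k\}=\{(s,y):c_j^*(s,y)\ge k\}$ are over $T\times V$. *)

theory Defs
  imports "HOL-Analysis.Analysis"
begin

type_synonym pt = "real \<times> (real^3)"

definition pos_measures :: "pt set \<Rightarrow> pt measure set" where
  "pos_measures X = {S. sets S = sets (restrict_space borel X)}"

definition measurement_tuple :: "pt set \<Rightarrow> nat \<Rightarrow> (nat \<Rightarrow> pt \<Rightarrow> real) \<Rightarrow> (nat \<Rightarrow> real) \<Rightarrow> bool" where
  "measurement_tuple X m c clim \<longleftrightarrow> m \<ge> 1 \<and>
     (\<forall>j\<in>{1..m}. c j \<in> borel_measurable (restrict_space borel X) \<and>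
                  (\<forall>x\<in>X. 0 \<le> c j x) \<and> clim j \<noteq> 0)"

definition pairing :: "pt measure \<Rightarrow> (pt \<Rightarrow> real) \<Rightarrow> ennreal" where
  "pairing S f = (\<integral>\<^sup>+ x. ennreal (f x) \<partial>S)"

definition meas_cond :: "nat \<Rightarrow> (nat \<Rightarrow> pt \<Rightarrow> real) \<Rightarrow> (nat \<Rightarrow> real) \<Rightarrow> pt measure \<Rightarrow> bool" where
  "meas_cond m c clim S \<longleftrightarrow>
     (\<forall>j\<in>{1..m}. (clim j > 0 \<longrightarrow> ennreal (clim j) \<le> pairing S (c j)) \<and>
                  (clim j < 0 \<longrightarrow> pairing S (c j) < ennreal \<bar>clim j\<bar>))"

text \<open>Footprints. For a real M, "S(A) \<ge> M" is rendered as ennreal M \<le> emeasure S A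
  and "S(A) < M" as emeasure S A < ennreal M (both exact, since ennreal truncates at 0).\<close>
definition posterior_footprint ::
  "pt set \<Rightarrow> nat \<Rightarrow> (nat \<Rightarrow> pt \<Rightarrow> real) \<Rightarrow> (nat \<Rightarrow> real) \<Rightarrow> pt measure set \<Rightarrow> real \<Rightarrow> pt set \<Rightarrow> bool" where
  "posterior_footprint X m c clim Adm M A \<longleftrightarrow> A \<in> sets (restrict_space borel X) \<and>
     (\<forall>S\<in>Adm. meas_cond m c clim S \<longrightarrow> ennreal M \<le> emeasure S A)"

definition posterior_zero_footprint ::
  "pt set \<Rightarrow> nat \<Rightarrow> (nat \<Rightarrow> pt \<Rightarrow> real) \<Rightarrow> (nat \<Rightarrow> real) \<Rightarrow> pt measure set \<Rightarrow> real \<Rightarrow> pt set \<Rightarrow> bool" where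
  "posterior_zero_footprint X m c clim Adm M A \<longleftrightarrow> A \<in> sets (restrict_space borel X) \<and>
     (\<forall>S\<in>Adm. meas_cond m c clim S \<longrightarrow> emeasure S A < ennreal M)"

definition upper_set :: "pt set \<Rightarrow> (pt \<Rightarrow> real) \<Rightarrow> real \<Rightarrow> pt set" where
  "upper_set X f k = {x\<in>X. f x \<ge> k}"

definition lower_set :: "pt set \<Rightarrow> (pt \<Rightarrow> real) \<Rightarrow> real \<Rightarrow> pt set" where
  "lower_set X f k = {x\<in>X. f x < k}"

definition ratio_class ::
  "pt set \<Rightarrow> nat \<Rightarrow> (nat \<Rightarrow> pt \<Rightarrow> real) \<Rightarrow> (nat \<Rightarrow> real) \<Rightarrow> (nat \<Rightarrow> real) \<Rightarrow> (nat \<Rightarrow> real) \<Rightarrow> pt measure set" where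
  "ratio_class X m c k \<alpha> \<beta> = {S\<in>pos_measures X. \<forall>j\<in>{1..m}.
      ennreal (\<beta> j) * emeasure S (upper_set X (c j) (k j)) \<le> emeasure S (lower_set X (c j) (k j)) \<and>
      emeasure S (lower_set X (c j) (k j)) \<le> ennreal (\<alpha> j) * emeasure S (upper_set X (c j) (k j))}"

end

theory Submission
  imports Defs
begin

lemma basics:
  assumes S: "sets S = sets (restrict_space borel X)"
    and f: "f \<in> borel_measurable (restrict_space borel X)"
  shows "space S = X" "upper_set X f kk \<in> sets S" "lower_set X f kk \<in> sets S"
    "f \<in> borel_measurable S"
proof -
  show sp: "space S = X" using sets_eq_imp_space_eq[OF S] by (simp add: space_restrict_space)
  show fm: "f \<in> borel_measurable S" using f measurable_cong_sets[OF S refl] by blast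
  have "{x\<in>space S. kk \<le> f x} \<in> sets S" using fm by measurable
  then show "upper_set X f kk \<in> sets S" using sp by (simp add: upper_set_def)
  have "{x\<in>space S. f x < kk} \<in> sets S" using fm by measurable
  then show "lower_set X f kk \<in> sets S" using sp by (simp add: lower_set_def)
qed

lemma lower_bd:
  assumes S: "sets S = sets (restrict_space borel X)"
    and f: "f \<in> borel_measurable (restrict_space borel X)"
    and nn: "\<forall>x\<in>X. 0 \<le> f x" and X: "X \<noteq> {}" and kk: "0 < kk" and b: "0 \<le> b"
    and rat: "ennreal b * emeasure S (upper_set X f kk) \<le> emeasure S (lower_set X f kk)"
    and pa: "pairing S f < ennreal a"
  shows "emeasure S (upper_set X f kk) < ennreal (a / (kk + b * Inf (f ` X)))"
proof -
  note B = basics[OF S f]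
  define i where "i = Inf (f ` X)"
  define U where "U = upper_set X f kk"
  define L where "L = lower_set X f kk"
  have bb: "bdd_below (f ` X)" using nn by (auto intro: bdd_belowI[where m=0])
  have i0: "0 \<le> i" unfolding i_def using X nn by (auto intro: cInf_greatest)
  have fi: "\<And>x. x \<in> X \<Longrightarrow> i \<le> f x" unfolding i_def using bb by (auto intro: cInf_lower)
  have eq: "(\<integral>\<^sup>+ x. ennreal kk * indicator U x + ennreal i * indicator L x \<partial>S)
      = ennreal kk * emeasure S U + ennreal i * emeasure S L"
    using B unfolding U_def L_def
    by (simp add: nn_integral_add nn_integral_cmult_indicator)
  have "(\<integral>\<^sup>+ x. ennreal kk * indicator U x + ennreal i * indicator L x \<partial>S) \<le> pairing S f"
    unfolding pairing_def
  proof (rule nn_integral_mono)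
    fix x assume "x \<in> space S"
    hence x: "x \<in> X" using B by simp
    show "ennreal kk * indicator U x + ennreal i * indicator L x \<le> ennreal (f x)"
    proof (cases "kk \<le> f x")
      case True thus ?thesis using x by (simp add: U_def L_def upper_set_def lower_set_def ennreal_leI)
    next
      case False thus ?thesis using x fi[OF x] by (simp add: U_def L_def upper_set_def lower_set_def ennreal_leI)
    qed
  qed
  hence "ennreal kk * emeasure S U + ennreal i * emeasure S L \<le> pairing S f" using eq by simp
  moreover have "ennreal i * (ennreal b * emeasure S U) \<le> ennreal i * emeasure S L"
    using rat unfolding U_def L_def by (rule mult_left_mono) simp
  ultimately have "ennreal kk * emeasure S U + ennreal i * (ennreal b * emeasure S U) < ennreal a"
    using pa by (meson add_left_mono order.trans order_le_less_trans)
  also have "ennreal kk * emeasure S U + ennreal i * (ennreal b * emeasure S U)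
     = ennreal (kk + b * i) * emeasure S U"
    using i0 b kk by (simp add: ennreal_plus ennreal_mult algebra_simps)
  finally have lt: "ennreal (kk + b * i) * emeasure S U < ennreal a" .
  have d: "0 < kk + b * i" using kk b i0 by (simp add: add_pos_nonneg)
  show ?thesis
  proof (cases "emeasure S U = \<infinity>")
    case True thus ?thesis using lt d by (simp add: ennreal_mult_top)
  next
    case False
    then obtain u where u: "emeasure S U = ennreal u" "0 \<le> u" by (cases "emeasure S U") auto
    have "ennreal ((kk + b*i) * u) < ennreal a" using lt u d by (simp add: ennreal_mult)
    hence "(kk + b*i) * u < a" using u d by (simp add: ennreal_less_iff)
    hence "u < a / (kk + b*i)" using d by (simp add: pos_less_divide_eq mult.commute)
    thus ?thesis using u unfolding U_def i_def[symmetric] by (simp add: ennreal_less_iff)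
  qed
qed

lemma upper_bd:
  assumes S: "sets S = sets (restrict_space borel X)"
    and f: "f \<in> borel_measurable (restrict_space borel X)"
    and nn: "\<forall>x\<in>X. 0 \<le> f x" and kk: "0 < kk" and al: "0 \<le> al"
    and ba: "bdd_above (f ` X)" and sp: "0 < Sup (f ` X)"
    and rat: "emeasure S (lower_set X f kk) \<le> ennreal al * emeasure S (upper_set X f kk)"
    and pa: "ennreal a \<le> pairing S f"
  shows "ennreal (a / (kk * al + Sup (f ` X))) \<le> emeasure S (upper_set X f kk)"
proof -
  note B = basics[OF S f]
  define s where "s = Sup (f ` X)"
  define U where "U = upper_set X f kk"
  define L where "L = lower_set X f kk"
  have fs: "\<And>x. x \<in> X \<Longrightarrow> f x \<le> s" unfolding s_def using ba by (auto intro: cSup_upper)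
  have s0: "0 < s" using sp s_def by simp
  have "pairing S f \<le> (\<integral>\<^sup>+ x. ennreal kk * indicator L x + ennreal s * indicator U x \<partial>S)"
    unfolding pairing_def
  proof (rule nn_integral_mono)
    fix x assume "x \<in> space S"
    hence x: "x \<in> X" using B by simp
    show "ennreal (f x) \<le> ennreal kk * indicator L x + ennreal s * indicator U x"
    proof (cases "kk \<le> f x")
      case True thus ?thesis using x fs[OF x] by (simp add: U_def L_def upper_set_def lower_set_def ennreal_leI)
    next
      case False thus ?thesis using x by (simp add: U_def L_def upper_set_def lower_set_def ennreal_leI)
    qed
  qed
  also have "(\<integral>\<^sup>+ x. ennreal kk * indicator L x + ennreal s * indicator U x \<partial>S)
      = ennreal kk * emeasure S L + ennreal s * emeasure S U"
    using B unfolding U_def L_def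
    by (simp add: nn_integral_add nn_integral_cmult_indicator)
  also have "\<dots> \<le> ennreal kk * (ennreal al * emeasure S U) + ennreal s * emeasure S U"
    using rat unfolding U_def L_def by (intro add_right_mono mult_left_mono) auto
  also have "\<dots> = ennreal (kk * al + s) * emeasure S U"
    using s0 al kk by (simp add: ennreal_plus ennreal_mult distrib_right mult.assoc)
  finally have le: "ennreal a \<le> ennreal (kk * al + s) * emeasure S U" using pa by simp
  have d: "0 < kk * al + s" using kk al s0 by (simp add: add_nonneg_pos)
  show ?thesis
  proof (cases "emeasure S U = \<infinity>")
    case True thus ?thesis unfolding U_def by simp
  next
    case False
    then obtain u where u: "emeasure S U = ennreal u" "0 \<le> u" by (cases "emeasure S U") auto
    have "ennreal a \<le> ennreal ((kk * al + s) * u)" using le u d by (simp add: ennreal_mult)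
    hence "a \<le> (kk * al + s) * u" using u d
      by (metis ennreal_le_iff mult_nonneg_nonneg less_imp_le ennreal_le_iff2 linorder_not_le order.strict_trans2 ennreal_less_zero_iff)
    hence "a / (kk * al + s) \<le> u" using d by (simp add: pos_divide_le_eq mult.commute)
    thus ?thesis using u unfolding U_def s_def[symmetric] by simp
  qed
qed
theorem mainTheorem15:
  fixes T :: "real set" and V :: "(real^3) set"
    and m :: nat and c :: "nat \<Rightarrow> pt \<Rightarrow> real" and clim :: "nat \<Rightarrow> real"
    and k \<alpha> \<beta> :: "nat \<Rightarrow> real"
  assumes T: "is_interval T" "T \<noteq> {}"
    and V: "V \<noteq> {}"
    and tuple: "measurement_tuple (T \<times> V) m c clim"
    and Jp: "{j\<in>{1..m}. clim j > 0} \<noteq> {}"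
    and Jm: "{j\<in>{1..m}. clim j < 0} \<noteq> {}"
    and sup_pos: "\<forall>j\<in>{1..m}. clim j > 0 \<longrightarrow>
                    bdd_above (c j ` (T \<times> V)) \<and> 0 < Sup (c j ` (T \<times> V))"
    and k_pos: "\<forall>j\<in>{1..m}. 0 < k j"
    and ab: "\<forall>j\<in>{1..m}. 0 \<le> \<beta> j \<and> \<beta> j \<le> \<alpha> j"
  shows
    "posterior_zero_footprint (T \<times> V) m c clim (ratio_class (T \<times> V) m c k \<alpha> \<beta>)
        (\<Sum>j\<in>{j\<in>{1..m}. clim j < 0}. - clim j / (k j + \<beta> j * Inf (c j ` (T \<times> V))))
        (\<Union>j\<in>{j\<in>{1..m}. clim j < 0}. upper_set (T \<times> V) (c j) (k j))
   \<and> posterior_footprint (T \<times> V) m c clim (ratio_class (T \<times> V) m c k \<alpha> \<beta>)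
        (Max ((\<lambda>j. clim j / (k j * \<alpha> j + Sup (c j ` (T \<times> V)))) ` {j\<in>{1..m}. clim j > 0}))
        (\<Union>j\<in>{j\<in>{1..m}. clim j > 0}. upper_set (T \<times> V) (c j) (k j))
   \<and> posterior_footprint (T \<times> V) m c clim (ratio_class (T \<times> V) m c k \<alpha> \<beta>)
        (Max ((\<lambda>j. clim j / (k j * \<alpha> j + Sup (c j ` (T \<times> V)))) ` {j\<in>{1..m}. clim j > 0})
         + (\<Sum>j\<in>{j\<in>{1..m}. clim j < 0}. clim j / (k j + \<beta> j * Inf (c j ` (T \<times> V)))))
        ((\<Union>j\<in>{j\<in>{1..m}. clim j > 0}. upper_set (T \<times> V) (c j) (k j))
         - (\<Union>j\<in>{j\<in>{1..m}. clim j < 0}. upper_set (T \<times> V) (c j) (k j)))"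
proof -
  define X where "X = T \<times> V"
  define Jp where "Jp = {j\<in>{1..m}. clim j > 0}"
  define Jm where "Jm = {j\<in>{1..m}. clim j < 0}"
  define U where "U j = upper_set X (c j) (k j)" for j
  define b where "b j = - clim j / (k j + \<beta> j * Inf (c j ` X))" for j
  define v where "v j = clim j / (k j * \<alpha> j + Sup (c j ` X))" for j
  define MZ where "MZ = (\<Sum>j\<in>Jm. b j)"
  define MF where "MF = Max (v ` Jp)"
  define Z where "Z = (\<Union>j\<in>Jm. U j)"
  define F where "F = (\<Union>j\<in>Jp. U j)"
  have X: "X \<noteq> {}" using T V unfolding X_def by auto
  have tp: "\<forall>j\<in>{1..m}. c j \<in> borel_measurable (restrict_space borel X) \<and>
                  (\<forall>x\<in>X. 0 \<le> c j x) \<and> clim j \<noteq> 0"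
    using tuple unfolding measurement_tuple_def X_def by auto
  have finJ: "finite Jp" "finite Jm" unfolding Jp_def Jm_def by auto
  have Jne: "Jp \<noteq> {}" "Jm \<noteq> {}" using Jp Jm unfolding Jp_def Jm_def by auto
  have Us: "U j \<in> sets (restrict_space borel X)" if "j \<in> {1..m}" for j
    using basics(2)[OF refl, of "c j" X "k j"] tp that unfolding U_def by auto
  have Zs: "Z \<in> sets (restrict_space borel X)" unfolding Z_def
    by (rule sets.finite_UN[OF finJ(2)]) (auto intro: Us simp: Jm_def)
  have Fs: "F \<in> sets (restrict_space borel X)" unfolding F_def
    by (rule sets.finite_UN[OF finJ(1)]) (auto intro: Us simp: Jp_def)
  have Zb: "emeasure S Z < ennreal MZ"
    if S: "S \<in> ratio_class X m c k \<alpha> \<beta>" and mc: "meas_cond m c clim S" for S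
  proof -
    have sS: "sets S = sets (restrict_space borel X)" using S
      unfolding ratio_class_def pos_measures_def by auto
    have lt: "emeasure S (U j) < ennreal (b j)" if j: "j \<in> Jm" for j
    proof -
      have j1: "j \<in> {1..m}" "clim j < 0" using j unfolding Jm_def by auto
      have "pairing S (c j) < ennreal \<bar>clim j\<bar>" using mc j1 unfolding meas_cond_def by auto
      hence "emeasure S (upper_set X (c j) (k j)) < ennreal (\<bar>clim j\<bar> / (k j + \<beta> j * Inf (c j ` X)))"
        using S j1 tp k_pos ab X
        by (intro lower_bd[OF sS]) (auto simp: ratio_class_def)
      thus ?thesis using j1 unfolding U_def b_def by simp
    qed
    define u where "u j = enn2real (emeasure S (U j))" for j
    have ue: "emeasure S (U j) = ennreal (u j)" "u j < b j" if "j \<in> Jm" for j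
    proof -
      show e: "emeasure S (U j) = ennreal (u j)" unfolding u_def using lt[OF that]
        by (simp add: ennreal_enn2real_if less_top_ennreal) (metis top.not_eq_extremum infinity_ennreal_def not_less_iff_gr_or_eq top_greatest)
      show "u j < b j" using lt[OF that] unfolding e
        by (metis ennreal_less_iff enn2real_nonneg u_def)
    qed
    have "emeasure S Z \<le> (\<Sum>j\<in>Jm. emeasure S (U j))" unfolding Z_def
      using sS Us by (intro emeasure_subadditive_finite[OF finJ(2)]) (auto simp: Jm_def)
    also have "\<dots> = (\<Sum>j\<in>Jm. ennreal (u j))" using ue by simp
    also have "\<dots> = ennreal (\<Sum>j\<in>Jm. u j)" by (rule sum_ennreal) (simp add: u_def)
    also have "\<dots> < ennreal MZ" unfolding MZ_def
    proof (subst ennreal_less_iff)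
      show "0 \<le> sum u Jm" by (simp add: u_def sum_nonneg)
      show "sum u Jm < sum b Jm" using ue(2) finJ(2) Jne(2) by (intro sum_strict_mono) auto
    qed
    finally show ?thesis .
  qed
  have Fb: "ennreal MF \<le> emeasure S F"
    if S: "S \<in> ratio_class X m c k \<alpha> \<beta>" and mc: "meas_cond m c clim S" for S
  proof -
    have sS: "sets S = sets (restrict_space borel X)" using S
      unfolding ratio_class_def pos_measures_def by auto
    obtain j where j: "j \<in> Jp" "MF = v j" unfolding MF_def
    proof -
      have "Max (v ` Jp) \<in> v ` Jp" using finJ(1) Jne(1) by (intro Max_in) auto
      thus ?thesis using that unfolding MF_def by auto
    qed
    have j1: "j \<in> {1..m}" "clim j > 0" using j unfolding Jp_def by auto
    have "ennreal (clim j) \<le> pairing S (c j)" using mc j1 unfolding meas_cond_def by auto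
    hence "ennreal (v j) \<le> emeasure S (U j)" unfolding v_def U_def
      using S j1 tp k_pos ab sup_pos unfolding X_def[symmetric]
      by (intro upper_bd[OF sS]) (auto simp: ratio_class_def intro: order_trans[of 0 "\<beta> j"])
    also have "\<dots> \<le> emeasure S F" using sS Fs j(1)
      by (intro emeasure_mono) (auto simp: F_def)
    finally show ?thesis using j by simp
  qed
  have eqs: "(\<Sum>j\<in>Jm. clim j / (k j + \<beta> j * Inf (c j ` X))) = - MZ"
    unfolding MZ_def b_def by (simp add: sum_negf[symmetric])
  have FZ: "ennreal (MF - MZ) \<le> emeasure S (F - Z)"
    if S: "S \<in> ratio_class X m c k \<alpha> \<beta>" and mc: "meas_cond m c clim S" for S
  proof -
    have sS: "sets S = sets (restrict_space borel X)" using S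
      unfolding ratio_class_def pos_measures_def by auto
    have "emeasure S F \<le> emeasure S ((F - Z) \<union> Z)" using sS Fs Zs
      by (intro emeasure_mono) auto
    also have "\<dots> \<le> emeasure S (F - Z) + emeasure S Z" using sS Fs Zs
      by (intro emeasure_subadditive) auto
    finally have le: "ennreal MF \<le> emeasure S (F - Z) + emeasure S Z"
      using Fb[OF S mc] by simp
    have zl: "emeasure S Z < ennreal MZ" using Zb[OF S mc] .
    show ?thesis
    proof (cases "emeasure S (F - Z) = \<infinity>")
      case True thus ?thesis by simp
    next
      case False
      then obtain a where a: "emeasure S (F - Z) = ennreal a" "0 \<le> a"
        by (cases "emeasure S (F - Z)") auto
      obtain z where z: "emeasure S Z = ennreal z" "0 \<le> z"
        using zl by (cases "emeasure S Z") auto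
      have "z < MZ" using zl z by (simp add: ennreal_less_iff)
      have "ennreal MF \<le> ennreal (a + z)" using le a z by (simp add: ennreal_plus)
      hence "MF \<le> a + z" using a z by (metis ennreal_le_iff add_nonneg_nonneg)
      hence "MF - MZ \<le> a" using \<open>z < MZ\<close> by simp
      thus ?thesis using a by (simp add: ennreal_leI)
    qed
  qed
  show ?thesis
    unfolding X_def[symmetric] Jp_def[symmetric] Jm_def[symmetric] U_def[symmetric]
      b_def[symmetric] v_def[symmetric] MZ_def[symmetric] MF_def[symmetric]
      Z_def[symmetric] F_def[symmetric] eqs
    unfolding posterior_zero_footprint_def posterior_footprint_def
    using Zs Fs Zb Fb FZ by auto
qed

end
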